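(* Let $J>0$, $h\ne0$, $\rho>0$, and $\varepsilon\in\mathcal{E}_{h,\rho}$. Let $f:\mathbb{R}^N\to\mathbb{R}$ be integrable with $\langle|f|\rangle_{\mathrm{MC}}^{m_\pm,\rho;N}\le K$ for some $K\ge0$ whenever these ensembles are defined. Then \[ \left|\langle f\rangle_{\mathrm{MC}}^{\varepsilon,\rho;N}-\langle f\rangle_{\mathrm{MC}}^{m,\rho;N}\right|\le2K\left|\frac{\rho-\left(\frac{|h|}J+\sqrt{\frac{h^2}{J^2}-\frac{2\varepsilon}J}\right)^2}{\rho-\left(\frac{|h|}J-\sqrt{\frac{h^2}{J^2}-\frac{2\varepsilon}J}\right)^2}\right|^{\frac{N-3}2}, \] where $m=-\frac hJ+\mathrm{sgn}(h)\sqrt{\frac{h^2}{J^2}-\frac{2\varepsilon}J}$. In addition, $\langle f\rangle_{\mathrm{MC}}^{\varepsilon,\rho;N}=\langle f\rangle_{\mathrm{MC}}^{m,\rho;N}+O(e^{-cN})$ for some constant $c>0$.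
   Context: Mean-field spherical model: $\Lambda$ finite lattice, $N=|\Lambda|$, fields $\phi\in\mathbb{R}^\Lambda\cong\mathbb{R}^N$, $J>0$, $h\in\mathbb{R}$, energy $H[\phi]=-\frac J{2N}(\sum_x\phi_x)^2-h\sum_x\phi_x$, particle number $\sum_x\phi_x^2$. For $\rho>0$, $|m|<\sqrt\rho$, $\mu_{\mathrm{MC}}^{m,\rho;N}$ is the normalized uniform surface measure on the $(N-2)$-sphere $\{\sum_x\phi_x=mN,\ \sum_x\phi_x^2=\rho N\}$, and $Z_{\mathrm{MC}}(m,\rho;N)=(\rho-m^2)^{(N-3)/2}$. For $\varepsilon\le\frac{h^2}{2J}$ set $m_\pm=-\frac hJ\pm\sqrt{\frac{h^2}{J^2}-\frac{2\varepsilon}J}$. Fixed energy ensemble: if $\varepsilon<\frac{h^2}{2J}$ and $m_+^2,m_-^2<\rho$, $\langle f\rangle_{\mathrm{MC}}^{\varepsilon,\rho;N}=\sum_{\pm}\frac{Z_{\mathrm{MC}}(m_\pm,\rho;N)}{Z_{\mathrm{MC}}(m_+,\rho;N)+Z_{\mathrm{MC}}(m_-,\rho;N)}\langle f\rangle_{\mathrm{MC}}^{m_\pm,\rho;N}$; if $\varepsilon<\frac{h^2}{2J}$ and $\min(m_-^2,m_+^2)<\rho\le\max(m_-^2,m_+^2)$, it equals $\langle f\rangle_{\mathrm{MC}}^{m',\rho;N}$ with $m'$ the one of $m_\pm$ of smaller absolute value; if $\varepsilon=\frac{h^2}{2J}$ and $\rho>\frac{h^2}{J^2}$, it equals $\langle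 f\rangle_{\mathrm{MC}}^{-h/J,\rho;N}$. The set of allowed energies is $\mathcal{E}_{h,\rho}=\{\varepsilon\le\frac{h^2}{2J}:\ |\frac{|h|}J-\sqrt{\frac{h^2}{J^2}-\frac{2\varepsilon}J}|<\sqrt\rho\}$. $O(\cdot)$ refers to $N\to\infty$. *)

theory Defs
  imports "HOL-Probability.Probability" "HOL-Library.Landau_Symbols"
begin

text \<open>Lattice \<Lambda> = {..<N}; fields are functions nat \<Rightarrow> real (restricted to {..<N}).\<close>

definition gauss :: "nat \<Rightarrow> (nat \<Rightarrow> real) measure" where
  "gauss N = PiM {..<N} (\<lambda>_. density lborel std_normal_density)"

text \<open>Map sending a standard Gaussian vector x to a point of the (N-2)-sphere
  {sum phi = m N, sum phi^2 = rho N}: centre m*1 plus radius sqrt(N(rho-m^2)) times the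
  normalised projection of x onto the hyperplane orthogonal to (1,...,1).
  Its image measure is the normalized uniform surface measure of that sphere.\<close>
definition mc_point :: "nat \<Rightarrow> real \<Rightarrow> real \<Rightarrow> (nat \<Rightarrow> real) \<Rightarrow> (nat \<Rightarrow> real)" where
  "mc_point N m \<rho> x =
     (let a = (\<Sum>i<N. x i) / real N;
          r = sqrt (\<Sum>i<N. (x i - a)\<^sup>2)
      in (\<lambda>i\<in>{..<N}. m + sqrt (real N * (\<rho> - m\<^sup>2)) * ((x i - a) / r)))"

definition mc_measure :: "nat \<Rightarrow> real \<Rightarrow> real \<Rightarrow> (nat \<Rightarrow> real) measure" where
  "mc_measure N m \<rho> = distr (gauss N) (PiM {..<N} (\<lambda>_. borel)) (mc_point N m \<rho>)"

definition mc_exp :: "nat \<Rightarrow> real \<Rightarrow> real \<Rightarrow> ((nat \<Rightarrow> real) \<Rightarrow> real) \<Rightarrow> real" where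
  "mc_exp N m \<rho> f = (\<integral>\<phi>. f \<phi> \<partial>mc_measure N m \<rho>)"

definition Z_mc :: "nat \<Rightarrow> real \<Rightarrow> real \<Rightarrow> real" where
  "Z_mc N m \<rho> = (\<rho> - m\<^sup>2) powr ((real N - 3) / 2)"

definition m_plus :: "real \<Rightarrow> real \<Rightarrow> real \<Rightarrow> real" where
  "m_plus J h \<epsilon> = - h / J + sqrt (h\<^sup>2 / J\<^sup>2 - 2 * \<epsilon> / J)"

definition m_minus :: "real \<Rightarrow> real \<Rightarrow> real \<Rightarrow> real" where
  "m_minus J h \<epsilon> = - h / J - sqrt (h\<^sup>2 / J\<^sup>2 - 2 * \<epsilon> / J)"

definition fe_exp :: "nat \<Rightarrow> real \<Rightarrow> real \<Rightarrow> real \<Rightarrow> real \<Rightarrow> ((nat \<Rightarrow> real) \<Rightarrow> real) \<Rightarrow> real" where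
  "fe_exp N J h \<epsilon> \<rho> f =
    (let mp = m_plus J h \<epsilon>; mm = m_minus J h \<epsilon> in
     if \<epsilon> < h\<^sup>2 / (2 * J) \<and> mp\<^sup>2 < \<rho> \<and> mm\<^sup>2 < \<rho> then
       (Z_mc N mp \<rho> * mc_exp N mp \<rho> f + Z_mc N mm \<rho> * mc_exp N mm \<rho> f)
         / (Z_mc N mp \<rho> + Z_mc N mm \<rho>)
     else if \<epsilon> < h\<^sup>2 / (2 * J) \<and> min (mm\<^sup>2) (mp\<^sup>2) < \<rho> \<and> \<rho> \<le> max (mm\<^sup>2) (mp\<^sup>2) then
       mc_exp N (if \<bar>mp\<bar> < \<bar>mm\<bar> then mp else mm) \<rho> f
     else if \<epsilon> = h\<^sup>2 / (2 * J) \<and> \<rho> > h\<^sup>2 / J\<^sup>2 then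
       mc_exp N (- h / J) \<rho> f
     else undefined)"

definition energy_set :: "real \<Rightarrow> real \<Rightarrow> real \<Rightarrow> real set" where
  "energy_set J h \<rho> = {\<epsilon>. \<epsilon> \<le> h\<^sup>2 / (2 * J) \<and>
      \<bar>\<bar>h\<bar> / J - sqrt (h\<^sup>2 / J\<^sup>2 - 2 * \<epsilon> / J)\<bar> < sqrt \<rho>}"

end

theory Submission
  imports Defs
begin

lemma key_bound:
  fixes za zb ea eb K :: real
  assumes "za > 0" "zb \<ge> 0" "\<bar>ea\<bar> \<le> K" "\<bar>eb\<bar> \<le> K"
  shows "\<bar>(za*ea + zb*eb)/(za+zb) - ea\<bar> \<le> 2*K*(zb/za)"
proof -
  have "(za*ea + zb*eb)/(za+zb) - ea = zb*(eb-ea)/(za+zb)"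
    using assms by (simp add: field_simps)
  hence "\<bar>(za*ea + zb*eb)/(za+zb) - ea\<bar> = zb*\<bar>eb-ea\<bar>/(za+zb)"
    using assms by (simp add: abs_mult)
  also have "\<dots> \<le> zb*(2*K)/(za+zb)"
    using assms by (intro divide_right_mono mult_left_mono) auto
  also have "\<dots> \<le> zb*(2*K)/za"
    using assms by (intro divide_left_mono mult_nonneg_nonneg) auto
  also have "\<dots> = 2*K*(zb/za)" by simp
  finally show ?thesis .
qed

lemma mc_abs_bound:
  assumes "mc_exp N m \<rho> (\<lambda>\<phi>. \<bar>f \<phi>\<bar>) \<le> K"
  shows "\<bar>mc_exp N m \<rho> f\<bar> \<le> K"
proof -
  have "\<bar>integral\<^sup>L (mc_measure N m \<rho>) f\<bar> \<le> integral\<^sup>L (mc_measure N m \<rho>) (\<lambda>x. \<bar>f x\<bar>)"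
    using integral_norm_bound[of "mc_measure N m \<rho>" f] by simp
  moreover have "integral\<^sup>L (mc_measure N m \<rho>) (\<lambda>x. \<bar>f x\<bar>) \<le> K"
    using assms unfolding mc_exp_def .
  ultimately show ?thesis unfolding mc_exp_def by linarith
qed

theorem theorem4p10:
  fixes J h \<rho> \<epsilon> K :: real and f :: "nat \<Rightarrow> (nat \<Rightarrow> real) \<Rightarrow> real"
  assumes "J > 0" and "h \<noteq> 0" and "\<rho> > 0" and "\<epsilon> \<in> energy_set J h \<rho>" and "K \<ge> 0"
    and "\<And>N m. m \<in> {m_plus J h \<epsilon>, m_minus J h \<epsilon>} \<Longrightarrow> m\<^sup>2 < \<rho> \<Longrightarrow>
           integrable (mc_measure N m \<rho>) (f N) \<and> mc_exp N m \<rho> (\<lambda>\<phi>. \<bar>f N \<phi>\<bar>) \<le> K"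
  shows "(\<forall>N. \<bar>fe_exp N J h \<epsilon> \<rho> (f N)
                 - mc_exp N (- h / J + sgn h * sqrt (h\<^sup>2 / J\<^sup>2 - 2 * \<epsilon> / J)) \<rho> (f N)\<bar>
            \<le> 2 * K * \<bar>(\<rho> - (\<bar>h\<bar> / J + sqrt (h\<^sup>2 / J\<^sup>2 - 2 * \<epsilon> / J))\<^sup>2)
                      / (\<rho> - (\<bar>h\<bar> / J - sqrt (h\<^sup>2 / J\<^sup>2 - 2 * \<epsilon> / J))\<^sup>2)\<bar>
                  powr ((real N - 3) / 2))
       \<and> (\<exists>c > 0. (\<lambda>N. fe_exp N J h \<epsilon> \<rho> (f N)
                 - mc_exp N (- h / J + sgn h * sqrt (h\<^sup>2 / J\<^sup>2 - 2 * \<epsilon> / J)) \<rho> (f N))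
             \<in> O(\<lambda>N. exp (- c * real N)))"
proof -
  define s where "s = sqrt (h\<^sup>2 / J\<^sup>2 - 2 * \<epsilon> / J)"
  define a where "a = \<bar>h\<bar>/J - s"
  define b where "b = \<bar>h\<bar>/J + s"
  define m where "m = - h / J + sgn h * s"
  define D where "D = (\<lambda>N. fe_exp N J h \<epsilon> \<rho> (f N) - mc_exp N m \<rho> (f N))"
  define q where "q = (\<rho> - b\<^sup>2) / (\<rho> - a\<^sup>2)"
  have eps: "\<epsilon> \<le> h\<^sup>2 / (2 * J)" and aabs: "\<bar>a\<bar> < sqrt \<rho>"
    using assms(4) unfolding energy_set_def a_def s_def by auto
  have "2 * \<epsilon> / J \<le> h\<^sup>2 / J\<^sup>2" using eps assms(1) by (simp add: field_simps power2_eq_square)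
  hence s0: "s \<ge> 0" unfolding s_def by simp
  have a2: "a\<^sup>2 < \<rho>"
  proof -
    have "\<bar>a\<bar>\<^sup>2 < (sqrt \<rho>)\<^sup>2" using aabs by (intro power_strict_mono) auto
    thus ?thesis using assms(3) by simp
  qed
  have hJ: "\<bar>h\<bar>/J > 0" using assms(1,2) by simp
  have mp: "m_plus J h \<epsilon> = - h / J + s" unfolding m_plus_def s_def by simp
  have mm: "m_minus J h \<epsilon> = - h / J - s" unfolding m_minus_def s_def by simp
  have signs: "(h > 0 \<and> m = m_plus J h \<epsilon> \<and> m_plus J h \<epsilon> = -a \<and> m_minus J h \<epsilon> = -b) \<or>
               (h < 0 \<and> m = m_minus J h \<epsilon> \<and> m_minus J h \<epsilon> = a \<and> m_plus J h \<epsilon> = b)"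
    using assms(2) unfolding mp mm m_def a_def b_def
    by (cases "h > 0") (auto simp: sgn_if)
  have main: "(\<forall>N. \<bar>D N\<bar> \<le> 2 * K * \<bar>q\<bar> powr ((real N - 3) / 2)) \<and>
              (\<exists>c > 0. D \<in> O(\<lambda>N. exp (- c * real N)))"
  proof (cases "s > 0 \<and> b\<^sup>2 < \<rho>")
    case True
    have ab: "a\<^sup>2 < b\<^sup>2"
    proof -
      have "\<bar>a\<bar> < b" using True hJ unfolding a_def b_def by auto
      hence "\<bar>a\<bar>\<^sup>2 < b\<^sup>2" by (intro power_strict_mono) auto
      thus ?thesis by simp
    qed
    have q0: "q > 0" "q < 1" unfolding q_def using True a2 ab by auto
    have epsl: "\<epsilon> < h\<^sup>2 / (2 * J)"
    proof (rule ccontr)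
      assume "\<not> ?thesis"
      hence "\<epsilon> = h\<^sup>2 / (2 * J)" using eps by simp
      hence "s = 0" unfolding s_def using assms(1) by (simp add: field_simps power2_eq_square)
      thus False using True by simp
    qed
    have bound: "\<bar>D N\<bar> \<le> 2 * K * q powr ((real N - 3) / 2)" for N
    proof -
      let ?e = "(real N - 3) / 2"
      have za: "(\<rho> - a\<^sup>2) powr ?e > 0" using a2 by simp
      have zb: "(\<rho> - b\<^sup>2) powr ?e \<ge> 0" by simp
      have rat: "(\<rho> - b\<^sup>2) powr ?e / (\<rho> - a\<^sup>2) powr ?e = q powr ?e"
        unfolding q_def using a2 True by (simp add: powr_divide)
      from signs show ?thesis
      proof
        assume H: "h > 0 \<and> m = m_plus J h \<epsilon> \<and> m_plus J h \<epsilon> = -a \<and> m_minus J h \<epsilon> = -b"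
        have Ea: "\<bar>mc_exp N (-a) \<rho> (f N)\<bar> \<le> K"
          using assms(6)[of "-a" N] H a2 by (intro mc_abs_bound) auto
        have Eb: "\<bar>mc_exp N (-b) \<rho> (f N)\<bar> \<le> K"
          using assms(6)[of "-b" N] H True by (intro mc_abs_bound) auto
        have "D N = (Z_mc N (-a) \<rho> * mc_exp N (-a) \<rho> (f N) + Z_mc N (-b) \<rho> * mc_exp N (-b) \<rho> (f N))
               / (Z_mc N (-a) \<rho> + Z_mc N (-b) \<rho>) - mc_exp N (-a) \<rho> (f N)"
          unfolding D_def fe_exp_def Let_def using H epsl a2 True by simp
        also have "\<bar>\<dots>\<bar> \<le> 2*K*(Z_mc N (-b) \<rho> / Z_mc N (-a) \<rho>)"
          using za zb Ea Eb unfolding Z_mc_def by (intro key_bound) auto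
        finally show ?thesis using rat unfolding Z_mc_def by simp
      next
        assume H: "h < 0 \<and> m = m_minus J h \<epsilon> \<and> m_minus J h \<epsilon> = a \<and> m_plus J h \<epsilon> = b"
        have Ea: "\<bar>mc_exp N a \<rho> (f N)\<bar> \<le> K"
          using assms(6)[of "a" N] H a2 by (intro mc_abs_bound) auto
        have Eb: "\<bar>mc_exp N b \<rho> (f N)\<bar> \<le> K"
          using assms(6)[of "b" N] H True by (intro mc_abs_bound) auto
        have "D N = (Z_mc N a \<rho> * mc_exp N a \<rho> (f N) + Z_mc N b \<rho> * mc_exp N b \<rho> (f N))
               / (Z_mc N a \<rho> + Z_mc N b \<rho>) - mc_exp N a \<rho> (f N)"
          unfolding D_def fe_exp_def Let_def using H epsl a2 True by (simp add: add.commute)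
        also have "\<bar>\<dots>\<bar> \<le> 2*K*(Z_mc N b \<rho> / Z_mc N a \<rho>)"
          using za zb Ea Eb unfolding Z_mc_def by (intro key_bound) auto
        finally show ?thesis using rat unfolding Z_mc_def by simp
      qed
    qed
    define c where "c = - ln q / 2"
    have c0: "c > 0" unfolding c_def using q0 by simp
    have qe: "q powr ((real N - 3) / 2) = q powr (-3/2) * exp (- c * real N)" for N
      unfolding c_def using q0 by (simp add: powr_def exp_add[symmetric] field_simps)
    have "D \<in> O(\<lambda>N. exp (- c * real N))"
    proof (rule bigoI[where c = "2 * K * q powr (-3/2)"])
      show "\<forall>\<^sub>F N in at_top. norm (D N) \<le> 2 * K * q powr (-3/2) * norm (exp (- c * real N))"
        using bound qe by (simp add: mult.assoc)
    qed
    thus ?thesis using bound q0 c0 by auto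
  next
    case False
    have D0: "D N = 0" for N
    proof (cases "s = 0")
      case True
      hence "h\<^sup>2 / J\<^sup>2 - 2 * \<epsilon> / J = 0" unfolding s_def by simp
      hence e: "\<epsilon> = h\<^sup>2 / (2 * J)" using assms(1) by (simp add: field_simps power2_eq_square)
      have "a\<^sup>2 = h\<^sup>2 / J\<^sup>2" unfolding a_def using True by (simp add: power_divide)
      hence r: "\<rho> > h\<^sup>2 / J\<^sup>2" using a2 by simp
      have "m = - h / J" unfolding m_def using True by simp
      thus ?thesis unfolding D_def fe_exp_def Let_def using e r by simp
    next
      case sF: False
      hence sp: "s > 0" using s0 by simp
      hence nb: "\<rho> \<le> b\<^sup>2" using False by auto
      have ab: "\<bar>a\<bar> < b" using sp hJ unfolding a_def b_def by auto
      hence ab2: "a\<^sup>2 < b\<^sup>2" using power_strict_mono[of "\<bar>a\<bar>" b 2] by simp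
      have epsl: "\<epsilon> < h\<^sup>2 / (2 * J)"
      proof (rule ccontr)
        assume "\<not> ?thesis"
        hence "\<epsilon> = h\<^sup>2 / (2 * J)" using eps by simp
        hence "s = 0" unfolding s_def using assms(1) by (simp add: field_simps power2_eq_square)
        thus False using sp by simp
      qed
      from signs show ?thesis
      proof
        assume H: "h > 0 \<and> m = m_plus J h \<epsilon> \<and> m_plus J h \<epsilon> = -a \<and> m_minus J h \<epsilon> = -b"
        show ?thesis unfolding D_def fe_exp_def Let_def using H epsl a2 nb ab ab2
          by (simp add: min_def max_def)
      next
        assume H: "h < 0 \<and> m = m_minus J h \<epsilon> \<and> m_minus J h \<epsilon> = a \<and> m_plus J h \<epsilon> = b"
        show ?thesis unfolding D_def fe_exp_def Let_def using H epsl a2 nb ab ab2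
          by (simp add: min_def max_def)
      qed
    qed
    have "D = (\<lambda>_. 0)" using D0 by auto
    thus ?thesis using assms(5) by (auto intro!: exI[of _ 1])
  qed
  show ?thesis using main unfolding D_def q_def a_def b_def m_def s_def .
qed

end
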